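(* Let $\kappa$ be an infinite cardinal. The set $B=\{(A,\,A\cap C,\,C) : A,C\in\mathcal{F}(\kappa),\ A\sim C\}$ is a maximal Boolean sublattice of the lattice $S$; that is, $B$ is a bounded Boolean sublattice of $S$ and no complemented bounded sublattice $C$ of $S$ with $B\subsetneq C$ is Boolean.
   Context: $\mathcal{F}(\kappa)$ is the Boolean lattice of subsets $X\subseteq\kappa$ that are finite or cofinite (i.e. $\kappa\setminus X$ finite). For $A,C\in\mathcal{F}(\kappa)$, write $A\sim C$ if either both $A$ and $C$ are finite or both $\kappa\setminus A$ and $\kappa\setminus C$ are finite. For $(A,B,C)$ set $\mu(A,B,C)=(A\cap B)\cup(A\cap C)\cup(B\cap C)$. A triple $(A,B,C)$ is balanced if $A\cap B=A\cap C=B\cap C$. The lattice $S$ is the set of balanced triples $(A,B,C)\in\mathcal{F}(\kappa)^3$ such that $C\setminus\mu(A,B,C)$ is finite, ordered componentwise; its meet is componentwise intersection and its join is $(A,B,C)\vee(A',B',C')=(U_1\cup m,U_2\cup m,U_3\cup m)$ where $(U_1,U_2,U_3)=(A\cup A',B\cup B',C\cup C')$ and $m=\mu(U_1,U_2,U_3)$. Its bounds are $(\emptyset,\emptyset,\emptyset)$ and $(\kappa,\kappa,\kappa)$. *)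

theory Defs
  imports Main
begin

text \<open>The infinite cardinal kappa is modelled by the universe of an infinite type 'a;
  subsets of kappa are sets of type 'a set.  Triples are 'a set \<times> 'a set \<times> 'a set.\<close>

type_synonym 'a triple = "'a set \<times> 'a set \<times> 'a set"

definition fincof :: "'a set \<Rightarrow> bool" where
  "fincof X \<longleftrightarrow> finite X \<or> finite (- X)"

definition simF :: "'a set \<Rightarrow> 'a set \<Rightarrow> bool" where
  "simF A C \<longleftrightarrow> (finite A \<and> finite C) \<or> (finite (- A) \<and> finite (- C))"

definition mu :: "'a set \<Rightarrow> 'a set \<Rightarrow> 'a set \<Rightarrow> 'a set" where
  "mu A B C = (A \<inter> B) \<union> (A \<inter> C) \<union> (B \<inter> C)"

definition balanced :: "'a triple \<Rightarrow> bool" where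
  "balanced t \<longleftrightarrow> (case t of (A, B, C) \<Rightarrow> A \<inter> B = A \<inter> C \<and> A \<inter> C = B \<inter> C)"

definition S :: "'a triple set" where
  "S = {(A, B, C). fincof A \<and> fincof B \<and> fincof C \<and> balanced (A, B, C)
                   \<and> finite (C - mu A B C)}"

definition meetS :: "'a triple \<Rightarrow> 'a triple \<Rightarrow> 'a triple" where
  "meetS x y = (case x of (A, B, C) \<Rightarrow> case y of (A', B', C') \<Rightarrow>
                 (A \<inter> A', B \<inter> B', C \<inter> C'))"

definition joinS :: "'a triple \<Rightarrow> 'a triple \<Rightarrow> 'a triple" where
  "joinS x y = (case x of (A, B, C) \<Rightarrow> case y of (A', B', C') \<Rightarrow>
                 (let U1 = A \<union> A'; U2 = B \<union> B'; U3 = C \<union> C'; m = mu U1 U2 U3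
                  in (U1 \<union> m, U2 \<union> m, U3 \<union> m)))"

definition botS :: "'a triple" where
  "botS = ({}, {}, {})"

definition topS :: "'a triple" where
  "topS = (UNIV, UNIV, UNIV)"

definition bounded_sublattice :: "'a triple set \<Rightarrow> bool" where
  "bounded_sublattice T \<longleftrightarrow> T \<subseteq> S \<and> botS \<in> T \<and> topS \<in> T \<and>
     (\<forall>x\<in>T. \<forall>y\<in>T. meetS x y \<in> T \<and> joinS x y \<in> T)"

definition complemented_sub :: "'a triple set \<Rightarrow> bool" where
  "complemented_sub T \<longleftrightarrow> (\<forall>x\<in>T. \<exists>y\<in>T. meetS x y = botS \<and> joinS x y = topS)"

definition distributive_sub :: "'a triple set \<Rightarrow> bool" where
  "distributive_sub T \<longleftrightarrow>
     (\<forall>x\<in>T. \<forall>y\<in>T. \<forall>z\<in>T. meetS x (joinS y z) = joinS (meetS x y) (meetS x z))"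

definition boolean_sublattice :: "'a triple set \<Rightarrow> bool" where
  "boolean_sublattice T \<longleftrightarrow> bounded_sublattice T \<and> complemented_sub T \<and> distributive_sub T"

definition Bset :: "'a triple set" where
  "Bset = {(A, A \<inter> C, C) | A C. fincof A \<and> fincof C \<and> simF A C}"

end

theory Submission
  imports Defs
begin

lemma Bset_iff: "(A, B, C) \<in> Bset \<longleftrightarrow> B = A \<inter> C \<and> fincof A \<and> fincof C \<and> simF A C"
  unfolding Bset_def by auto

lemma join_B: "joinS (A, A \<inter> C, C) (A', A' \<inter> C', C') = (A \<union> A', (A \<union> A') \<inter> (C \<union> C'), C \<union> C')"
  unfolding joinS_def mu_def Let_def by auto

lemma meet_B: "meetS (A, A \<inter> C, C) (A', A' \<inter> C', C') = (A \<inter> A', (A \<inter> A') \<inter> (C \<inter> C'), C \<inter> C')"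
  unfolding meetS_def by auto

lemma fincof_Un: "fincof A \<Longrightarrow> fincof B \<Longrightarrow> fincof (A \<union> B)"
  unfolding fincof_def by (auto intro: finite_subset)

lemma fincof_Int: "fincof A \<Longrightarrow> fincof B \<Longrightarrow> fincof (A \<inter> B)"
  unfolding fincof_def by (auto intro: finite_subset)

lemma fincof_Compl: "fincof A \<Longrightarrow> fincof (- A)"
  unfolding fincof_def by auto

lemma simF_Un: "simF A C \<Longrightarrow> simF A' C' \<Longrightarrow> simF (A \<union> A') (C \<union> C')"
  unfolding simF_def by (auto intro: finite_subset)

lemma simF_Int: "simF A C \<Longrightarrow> simF A' C' \<Longrightarrow> fincof A \<Longrightarrow> fincof A' \<Longrightarrow> fincof C \<Longrightarrow> fincof C'
   \<Longrightarrow> simF (A \<inter> A') (C \<inter> C')"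
  unfolding simF_def fincof_def by (auto intro: finite_subset)

lemma simF_Compl: "simF A C \<Longrightarrow> simF (- A) (- C)"
  unfolding simF_def by auto

lemma Bset_sub_S: "Bset \<subseteq> S"
proof
  fix x assume "x \<in> Bset"
  then obtain A C where x: "x = (A, A \<inter> C, C)" "fincof A" "fincof C" "simF A C"
    unfolding Bset_def by auto
  have "finite (C - mu A (A \<inter> C) C)"
  proof -
    have "C - mu A (A \<inter> C) C = C - A" unfolding mu_def by auto
    moreover have "finite (C - A)" using x(4) unfolding simF_def
      by (auto intro: finite_subset)
    ultimately show ?thesis by simp
  qed
  then show "x \<in> S" using x unfolding S_def balanced_def
    by (auto intro: fincof_Int)
qed

lemma Bset_boolean: "boolean_sublattice (Bset :: 'a triple set)"
proof -
  have bot: "botS \<in> (Bset :: 'a triple set)"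
    unfolding botS_def Bset_iff fincof_def simF_def by auto
  have top: "topS \<in> (Bset :: 'a triple set)"
    unfolding topS_def Bset_iff fincof_def simF_def by auto
  have cl: "\<forall>x\<in>(Bset :: 'a triple set). \<forall>y\<in>Bset. meetS x y \<in> Bset \<and> joinS x y \<in> Bset"
  proof (intro ballI)
    fix x y :: "'a triple" assume "x \<in> Bset" "y \<in> Bset"
    then obtain A C A' C' where x: "x = (A, A \<inter> C, C)" "fincof A" "fincof C" "simF A C"
      and y: "y = (A', A' \<inter> C', C')" "fincof A'" "fincof C'" "simF A' C'"
      unfolding Bset_def by blast
    show "meetS x y \<in> Bset \<and> joinS x y \<in> Bset"
      unfolding x y meet_B join_B Bset_iff
      using x y by (auto intro: fincof_Un fincof_Int simF_Un simF_Int)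
  qed
  have comp: "complemented_sub (Bset :: 'a triple set)"
    unfolding complemented_sub_def
  proof
    fix x :: "'a triple" assume "x \<in> Bset"
    then obtain A C where x: "x = (A, A \<inter> C, C)" "fincof A" "fincof C" "simF A C"
      unfolding Bset_def by blast
    have "(- A, - A \<inter> - C, - C) \<in> Bset"
      unfolding Bset_iff using x by (auto intro: fincof_Compl simF_Compl)
    moreover have "meetS x (- A, - A \<inter> - C, - C) = botS"
      unfolding x meet_B botS_def by auto
    moreover have "joinS x (- A, - A \<inter> - C, - C) = topS"
      unfolding x join_B topS_def by auto
    ultimately show "\<exists>y\<in>Bset. meetS x y = botS \<and> joinS x y = topS" by blast
  qed
  have dist: "distributive_sub (Bset :: 'a triple set)"
    unfolding distributive_sub_def
  proof (intro ballI)
    fix x y z :: "'a triple" assume "x \<in> Bset" "y \<in> Bset" "z \<in> Bset"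
    then obtain A C A' C' A'' C'' where x: "x = (A, A \<inter> C, C)"
      and y: "y = (A', A' \<inter> C', C')" and z: "z = (A'', A'' \<inter> C'', C'')"
      unfolding Bset_def by blast
    have j: "joinS y z = (A' \<union> A'', (A' \<union> A'') \<inter> (C' \<union> C''), C' \<union> C'')"
      unfolding y z join_B ..
    have m1: "meetS x y = (A \<inter> A', (A \<inter> A') \<inter> (C \<inter> C'), C \<inter> C')"
      unfolding x y meet_B ..
    have m2: "meetS x z = (A \<inter> A'', (A \<inter> A'') \<inter> (C \<inter> C''), C \<inter> C'')"
      unfolding x z meet_B ..
    show "meetS x (joinS y z) = joinS (meetS x y) (meetS x z)"
      unfolding j m1 m2 unfolding x meet_B join_B by auto
  qed
  show ?thesis unfolding boolean_sublattice_def bounded_sublattice_def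
    using Bset_sub_S bot top cl comp dist by blast
qed



lemma snd_part:
  assumes dist: "distributive_sub T" and sub: "Bset \<subseteq> T"
    and xT: "(A, B, D) \<in> T" and xS: "(A, B, D) \<in> S"
  shows "B = A \<inter> D"
proof (rule ccontr)
  assume "B \<noteq> A \<inter> D"
  have bal: "A \<inter> B = A \<inter> D" "A \<inter> D = B \<inter> D"
    using xS unfolding S_def balanced_def by auto
  then obtain p where p: "p \<in> B" "p \<notin> A" "p \<notin> D"
    using \<open>B \<noteq> A \<inter> D\<close> by blast
  have yB: "({p}, {}, {}) \<in> Bset"
    using Bset_iff[of "{p}" "{}" "{}"] unfolding fincof_def simF_def by auto
  have zB: "({}, {}, {p}) \<in> Bset"
    using Bset_iff[of "{}" "{}" "{p}"] unfolding fincof_def simF_def by auto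
  have eq: "meetS ({p}, {}, {}) (joinS (A, B, D) ({}, {}, {p}))
      = joinS (meetS ({p}, {}, {}) (A, B, D)) (meetS ({p}, {}, {}) ({}, {}, {p}))"
    using dist yB zB xT sub unfolding distributive_sub_def by blast
  have "p \<in> fst (meetS ({p}, {}, {}) (joinS (A, B, D) ({}, {}, {p})))"
    using p unfolding meetS_def joinS_def mu_def Let_def by auto
  moreover have "fst (joinS (meetS ({p}, {}, {}) (A, B, D)) (meetS ({p}, {}, {}) ({}, {}, {p}))) = {}"
    using p unfolding meetS_def joinS_def mu_def Let_def by auto
  ultimately show False using eq by simp
qed

theorem proposition5p6:
  assumes "infinite (UNIV :: 'a set)"
  shows "boolean_sublattice (Bset :: 'a triple set) \<and>
         (\<forall>C :: 'a triple set. bounded_sublattice C \<and> complemented_sub C \<and> Bset \<subset> C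
              \<longrightarrow> \<not> boolean_sublattice C)"
proof (intro conjI allI impI)
  show "boolean_sublattice (Bset :: 'a triple set)" by (rule Bset_boolean)
next
  fix T :: "'a triple set"
  assume h: "bounded_sublattice T \<and> complemented_sub T \<and> Bset \<subset> T"
  show "\<not> boolean_sublattice T"
  proof
    assume "boolean_sublattice T"
    then have dist: "distributive_sub T" unfolding boolean_sublattice_def by blast
    have TS: "T \<subseteq> S" using h unfolding bounded_sublattice_def by blast
    have sub: "Bset \<subseteq> T" using h by blast
    obtain A B D where xT: "(A, B, D) \<in> T" and xnB: "(A, B, D) \<notin> Bset"
      using h by auto
    have xS: "(A, B, D) \<in> S" using xT TS by blast
    have BM: "B = A \<inter> D" using snd_part[OF dist sub xT xS] .
    have fA: "fincof A" and fD: "fincof D" and fin: "finite (D - mu A B D)"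
      using xS unfolding S_def by auto
    have "mu A B D = A \<inter> D" unfolding mu_def BM by auto
    moreover have "D - A \<inter> D = D - A" by auto
    ultimately have finDA: "finite (D - A)" using fin by simp
    have nsim: "\<not> simF A D" using xnB BM fA fD Bset_iff by blast
    have cA: "finite (- A)" and fD': "finite D"
    proof -
      have "\<not> (finite A \<and> finite (- D))"
      proof
        assume "finite A \<and> finite (- D)"
        then have "finite (- D \<union> A)" by simp
        moreover have "UNIV = (- D \<union> A) \<union> (D - A)" by auto
        ultimately have "finite (UNIV :: 'a set)" using finDA by (metis finite_Un)
        then show False using assms by simp
      qed
      then show "finite (- A)" "finite D" using nsim fA fD unfolding simF_def fincof_def by auto
    qed
    obtain Y1 Y2 Y3 where yT: "(Y1, Y2, Y3) \<in> T"
      and m: "meetS (A, B, D) (Y1, Y2, Y3) = botS" and j: "joinS (A, B, D) (Y1, Y2, Y3) = topS"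
      using h xT unfolding complemented_sub_def by (metis prod_cases3)
    have yS: "(Y1, Y2, Y3) \<in> S" using yT TS by blast
    have YM: "Y2 = Y1 \<inter> Y3" using snd_part[OF dist sub yT yS] .
    have "A \<inter> Y1 = {}" using m unfolding meetS_def botS_def by auto
    then have fY1: "finite Y1" proof -
      have "Y1 \<subseteq> - A" using \<open>A \<inter> Y1 = {}\<close> by blast
      then show ?thesis using cA by (rule finite_subset)
    qed
    have "finite (Y3 - mu Y1 Y2 Y3)" using yS unfolding S_def by auto
    moreover have "mu Y1 Y2 Y3 = Y1 \<inter> Y3" unfolding mu_def YM by auto
    moreover have "Y3 - Y1 \<inter> Y3 = Y3 - Y1" by auto
    ultimately have "finite (Y3 - Y1)" by simp
    then have fY3: "finite Y3" using fY1 by (metis finite_Diff2)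
    let ?U2 = "B \<union> Y2" and ?U3 = "D \<union> Y3"
    have "snd (snd (joinS (A, B, D) (Y1, Y2, Y3))) \<subseteq> ?U2 \<union> ?U3"
      unfolding joinS_def mu_def Let_def by auto
    moreover have "finite (?U2 \<union> ?U3)" using fD' fY1 fY3 BM YM by auto
    ultimately have "finite (snd (snd (joinS (A, B, D) (Y1, Y2, Y3))))" by (rule finite_subset)
    then show False using j assms unfolding topS_def by simp
  qed
qed

end
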